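(* Suppose all issues are binary and there is a single order $\mathcal O$ of the issues such that every agent's preference ranking is $\mathcal O$-legal. Then local dominance improvement dynamics converge: from any initial vote profile, every sequence of LDI steps is finite. This holds for any scheduler and for any nonnegative uncertainty parameters of the agents, which may vary between rounds.
   Context: Issues $\mathcal P=\{1,\dots,p\}$ with candidate sets $D_i$; binary means $D_i=\{0,1\}$ for all $i$. There are $n$ agents with strict rankings $\succ_j$ over $\mathcal D=\prod_iD_i$, and vote profiles $a\in\mathcal D^n$. Score tuples and outcomes: - For a score tuple $v$ (vectors $v^i\in\mathbb N^{D_i}$), the plurality outcome $f(v)$ picks on each issue the top-scoring candidate, with ties broken lexicographically. - $v+b$ adds one vote for $b^i$ on each issue $i$. - $s_{-j}(a)$ is the score tuple of $a$ without agent $j$. Uncertainty: per issue, a candidate-wise distance $\delta(s,\tilde s)=\max_c\hat\delta(s(c),\tilde s(c))$ with $\hat\delta$ monotone (e.g. $\ell_\infty$). With parameters $r_j$, $$\tilde S_{-j}(a;r_j)=\prod_i\{v^i:\delta(v^i,s^i_{-j}(a))\le r^i_j\}.$$ Local dominance: $\hat a_j$ $S$-beats $a_j$ if some $v\in S$ has $f(v+\hat a_j)\succ_j f(v+a_j)$. It $S$-dominates $a_j$ if it $S$-beats $a_j$ and $a_j$ does not $S$-beat it. An LDI step of agent $j$ on issue $i$ at $a$ (with $S=\tilde S_{-j}(a;r_j)$, $r_j$ being $j$'s current parameters) is a change to a vote that $S$-dominates $a_j$, differs from $a_j$ only on issue $i$, and is not $S$-dominated by another vote differing from $a_j$ only on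 issue $i$. Dynamics: at each round a scheduler picks an agent and an issue on which that agent has an LDI step, and the agent makes that step. $\mathcal O$-legality: for an order $\mathcal O=(o_1,\dots,o_p)$ of the issues, a ranking is $\mathcal O$-legal if, for each $i$, its relative ordering of the candidates of issue $o_i$ (holding all other issues fixed) depends only on the values of issues $o_1,\dots,o_{i-1}$, and not on the values of $o_{i+1},\dots,o_p$. *)

theory Defs
  imports Complex_Main
begin

text \<open>Binary issues: issues are the elements of a finite type 'i, each with
candidate set bool (False = 0, True = 1).\<close>

type_synonym 'i outcome = "'i \<Rightarrow> bool"
type_synonym 'i scores = "'i \<Rightarrow> bool \<Rightarrow> nat"

text \<open>Strict ranking: R x y means x is strictly preferred to y.\<close>
definition strict_ranking :: "('x \<Rightarrow> 'x \<Rightarrow> bool) \<Rightarrow> bool" where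
  "strict_ranking R \<longleftrightarrow> (\<forall>x. \<not> R x x) \<and> (\<forall>x y z. R x y \<longrightarrow> R y z \<longrightarrow> R x z)
     \<and> (\<forall>x y. x \<noteq> y \<longrightarrow> R x y \<or> R y x)"

text \<open>Plurality outcome; ties broken lexicographically, i.e. in favour of 0 = False.\<close>
definition plurality :: "'i scores \<Rightarrow> 'i outcome" where
  "plurality v i = (v i False < v i True)"

definition add_vote :: "'i scores \<Rightarrow> 'i outcome \<Rightarrow> 'i scores" where
  "add_vote v b i c = v i c + (if b i = c then 1 else 0)"

definition scores_minus :: "('a::finite \<Rightarrow> 'i outcome) \<Rightarrow> 'a \<Rightarrow> 'i scores" where
  "scores_minus a j i c = card {k. k \<noteq> j \<and> a k i = c}"

definition issue_dist :: "(nat \<Rightarrow> nat \<Rightarrow> real) \<Rightarrow> (bool \<Rightarrow> nat) \<Rightarrow> (bool \<Rightarrow> nat) \<Rightarrow> real" where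
  "issue_dist dh s t = Max (range (\<lambda>c. dh (s c) (t c)))"

definition monotone_dist :: "(nat \<Rightarrow> nat \<Rightarrow> real) \<Rightarrow> bool" where
  "monotone_dist dh \<longleftrightarrow> (\<forall>x. dh x x = 0) \<and> (\<forall>x y. 0 \<le> dh x y) \<and>
     (\<forall>x y z. x \<le> y \<longrightarrow> y \<le> z \<longrightarrow> dh x y \<le> dh x z \<and> dh z y \<le> dh z x)"

definition unc_set :: "(nat \<Rightarrow> nat \<Rightarrow> real) \<Rightarrow> ('a::finite \<Rightarrow> 'i outcome) \<Rightarrow> 'a \<Rightarrow> ('i \<Rightarrow> real) \<Rightarrow> 'i scores set" where
  "unc_set dh a j r = {v. \<forall>i. issue_dist dh (v i) (scores_minus a j i) \<le> r i}"

definition S_beats :: "('i outcome \<Rightarrow> 'i outcome \<Rightarrow> bool) \<Rightarrow> 'i scores set \<Rightarrow> 'i outcome \<Rightarrow> 'i outcome \<Rightarrow> bool" where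
  "S_beats R S b' b \<longleftrightarrow> (\<exists>v\<in>S. R (plurality (add_vote v b')) (plurality (add_vote v b)))"

definition S_dominates :: "('i outcome \<Rightarrow> 'i outcome \<Rightarrow> bool) \<Rightarrow> 'i scores set \<Rightarrow> 'i outcome \<Rightarrow> 'i outcome \<Rightarrow> bool" where
  "S_dominates R S b' b \<longleftrightarrow> S_beats R S b' b \<and> \<not> S_beats R S b b'"

definition LDI_step :: "(nat \<Rightarrow> nat \<Rightarrow> real) \<Rightarrow> ('i outcome \<Rightarrow> 'i outcome \<Rightarrow> bool) \<Rightarrow>
    ('a::finite \<Rightarrow> 'i outcome) \<Rightarrow> 'a \<Rightarrow> ('i \<Rightarrow> real) \<Rightarrow> 'i \<Rightarrow> 'i outcome \<Rightarrow> bool" where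
  "LDI_step dh R a j r i b' \<longleftrightarrow>
     (let S = unc_set dh a j r in
        S_dominates R S b' (a j) \<and> (\<forall>k. k \<noteq> i \<longrightarrow> b' k = a j k) \<and>
        \<not> (\<exists>b''. (\<forall>k. k \<noteq> i \<longrightarrow> b'' k = a j k) \<and> S_dominates R S b'' b'))"

definition issue_order :: "'i list \<Rightarrow> bool" where
  "issue_order os \<longleftrightarrow> distinct os \<and> set os = UNIV"

definition legal :: "'i list \<Rightarrow> ('i outcome \<Rightarrow> 'i outcome \<Rightarrow> bool) \<Rightarrow> bool" where
  "legal os R \<longleftrightarrow> (\<forall>k < length os. \<forall>x y. (\<forall>m < k. x (os ! m) = y (os ! m)) \<longrightarrow>
      (\<forall>c d. R (x(os ! k := c)) (x(os ! k := d)) \<longleftrightarrow> R (y(os ! k := c)) (y(os ! k := d))))"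

end

theory Submission
  imports Defs
begin

definition Wout :: "('a::finite \<Rightarrow> 'i outcome) \<Rightarrow> 'i outcome" where
  "Wout a = plurality (\<lambda>i c. card {k. a k i = c})"

lemma card_minus_add:
  fixes a :: "'a::finite \<Rightarrow> 'i outcome"
  shows "card {k. k \<noteq> j \<and> a k i = c} + (if a j i = c then 1 else 0) = card {k. a k i = c}"
proof (cases "a j i = c")
  case True
  then have "{k. a k i = c} = insert j {k. k \<noteq> j \<and> a k i = c}" by auto
  then show ?thesis using True by simp
next
  case False
  then have "{k. a k i = c} = {k. k \<noteq> j \<and> a k i = c}" by auto
  then show ?thesis using False by simp
qed

lemma add_minus: "add_vote (scores_minus a j) (a j) i = (\<lambda>c. card {k. a k i = c})"
  unfolding add_vote_def scores_minus_def using card_minus_add[of j a i] by auto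

lemma plur_local:
  assumes "v i = v' i" "b i = b' i"
  shows "plurality (add_vote v b) i = plurality (add_vote v' b') i"
  using assms unfolding plurality_def add_vote_def by simp

lemma plur_mono:
  assumes "plurality (add_vote v b) i \<noteq> plurality (add_vote v b') i"
  shows "plurality (add_vote v b) i = b i"
  using assms unfolding plurality_def add_vote_def
  by (cases "b i"; cases "b' i"; auto)

lemma key:
  fixes a :: "'a::finite \<Rightarrow> 'i outcome"
  assumes md: "monotone_dist dh" and sr: "strict_ranking R"
    and r0: "\<forall>k. 0 \<le> r k" and st: "LDI_step dh R a j r i b"
  shows "b i \<noteq> a j i \<and> (\<forall>k. k \<noteq> i \<longrightarrow> b k = a j k) \<and>
         R ((Wout a)(i := b i)) ((Wout a)(i := \<not> b i))"
proof -
  let ?S = "unc_set dh a j r"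
  have dom: "S_dominates R ?S b (a j)" and agr: "\<forall>k. k \<noteq> i \<longrightarrow> b k = a j k"
    using st unfolding LDI_step_def Let_def by auto
  from dom obtain v where vS: "v \<in> ?S"
    and vR: "R (plurality (add_vote v b)) (plurality (add_vote v (a j)))"
    unfolding S_dominates_def S_beats_def by auto
  have nb: "\<forall>v\<in>?S. \<not> R (plurality (add_vote v (a j))) (plurality (add_vote v b))"
    using dom unfolding S_dominates_def S_beats_def by auto
  have irr: "\<And>x. \<not> R x x" and tot: "\<And>x y. x \<noteq> y \<Longrightarrow> R x y \<or> R y x"
    using sr unfolding strict_ranking_def by auto
  have ne: "plurality (add_vote v b) \<noteq> plurality (add_vote v (a j))"
    using vR irr by metis
  have eqk: "\<And>k. k \<noteq> i \<Longrightarrow> plurality (add_vote v b) k = plurality (add_vote v (a j)) k"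
    by (rule plur_local) (use agr in auto)
  have nei: "plurality (add_vote v b) i \<noteq> plurality (add_vote v (a j)) i"
  proof
    assume h: "plurality (add_vote v b) i = plurality (add_vote v (a j)) i"
    have "plurality (add_vote v b) = plurality (add_vote v (a j))"
      by (rule ext) (metis h eqk)
    then show False using ne by simp
  qed
  have e1: "plurality (add_vote v b) i = b i" using plur_mono[OF nei] .
  have e2: "plurality (add_vote v (a j)) i = a j i" using plur_mono nei by metis
  have bne: "b i \<noteq> a j i" using nei e1 e2 by simp
  define s where "s = scores_minus a j"
  define v' where "v' = (\<lambda>k. if k = i then v i else s k)"
  have dh0: "\<And>x. dh x x = 0" using md unfolding monotone_dist_def by auto
  have v'S: "v' \<in> ?S"
    unfolding unc_set_def
  proof (intro CollectI allI)
    fix k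
    show "issue_dist dh (v' k) (scores_minus a j k) \<le> r k"
    proof (cases "k = i")
      case True then show ?thesis using vS unfolding unc_set_def v'_def s_def by auto
    next
      case False
      then have "issue_dist dh (v' k) (scores_minus a j k) = 0"
        unfolding issue_dist_def v'_def s_def by (simp add: dh0)
      then show ?thesis using r0 by simp
    qed
  qed
  have f1: "plurality (add_vote v' b) = (Wout a)(i := b i)"
  proof
    fix k show "plurality (add_vote v' b) k = ((Wout a)(i := b i)) k"
    proof (cases "k = i")
      case True
      have "plurality (add_vote v' b) i = plurality (add_vote v b) i"
        by (rule plur_local) (auto simp: v'_def)
      then show ?thesis using True e1 by simp
    next
      case False
      have "plurality (add_vote v' b) k = plurality (add_vote s (a j)) k"
        by (rule plur_local) (use False agr in \<open>auto simp: v'_def\<close>)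
      also have "\<dots> = Wout a k" unfolding Wout_def s_def plurality_def add_minus by simp
      finally show ?thesis using False by simp
    qed
  qed
  have f2: "plurality (add_vote v' (a j)) = (Wout a)(i := \<not> b i)"
  proof
    fix k show "plurality (add_vote v' (a j)) k = ((Wout a)(i := \<not> b i)) k"
    proof (cases "k = i")
      case True
      have "plurality (add_vote v' (a j)) i = plurality (add_vote v (a j)) i"
        by (rule plur_local) (auto simp: v'_def)
      then show ?thesis using True e2 bne by simp
    next
      case False
      have "plurality (add_vote v' (a j)) k = plurality (add_vote s (a j)) k"
        by (rule plur_local) (auto simp: v'_def False)
      also have "\<dots> = Wout a k" unfolding Wout_def s_def plurality_def add_minus by simp
      finally show ?thesis using False by simp
    qed
  qed
  have "(Wout a)(i := b i) \<noteq> (Wout a)(i := \<not> b i)" by (metis fun_upd_same)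
  then have "R ((Wout a)(i := b i)) ((Wout a)(i := \<not> b i)) \<or> R ((Wout a)(i := \<not> b i)) ((Wout a)(i := b i))"
    using tot by blast
  moreover have "\<not> R ((Wout a)(i := \<not> b i)) ((Wout a)(i := b i))"
    using nb v'S f1 f2 by metis
  ultimately show ?thesis using bne agr by blast
qed

lemma eventually_stop:
  fixes phi :: "nat \<Rightarrow> nat"
  assumes mono: "\<And>t. t \<ge> T \<Longrightarrow> phi (Suc t) \<le> phi t"
    and dec: "\<And>t. t \<ge> T \<Longrightarrow> Q t \<Longrightarrow> phi (Suc t) < phi t"
  shows "\<exists>T'\<ge>T. \<forall>t\<ge>T'. \<not> Q t"
  using mono dec
proof (induction "phi T" arbitrary: T rule: less_induct)
  case less
  show ?case
  proof (rule ccontr)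
    assume "\<not> (\<exists>T'\<ge>T. \<forall>t\<ge>T'. \<not> Q t)"
    then obtain t where t: "t \<ge> T" "Q t" by auto
    have m: "\<And>u. u \<ge> T \<Longrightarrow> phi u \<le> phi T"
    proof -
      fix u assume "u \<ge> T"
      then show "phi u \<le> phi T"
      proof (induction u rule: dec_induct)
        case base then show ?case by simp
      next
        case (step u) then show ?case using less.prems(1)[of u] by simp
      qed
    qed
    have lt: "phi (Suc t) < phi T" using less.prems(2)[OF t] m[OF t(1)] by simp
    have "\<exists>T'\<ge>Suc t. \<forall>t\<ge>T'. \<not> Q t"
      by (rule less.hyps[OF lt]) (use less.prems t in auto)
    then show False using \<open>\<not> (\<exists>T'\<ge>T. \<forall>t\<ge>T'. \<not> Q t)\<close> t(1) by (meson le_SucI order_trans)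
  qed
qed

theorem theorem2:
  fixes dh :: "nat \<Rightarrow> nat \<Rightarrow> real"
    and pref :: "'a::finite \<Rightarrow> ('i::finite \<Rightarrow> bool) \<Rightarrow> ('i \<Rightarrow> bool) \<Rightarrow> bool"
    and os :: "'i list"
  assumes "monotone_dist dh"
    and "\<forall>j. strict_ranking (pref j)"
    and "issue_order os"
    and "\<forall>j. legal os (pref j)"
  shows "\<not> (\<exists>prof :: nat \<Rightarrow> ('a \<Rightarrow> 'i \<Rightarrow> bool). \<forall>t. \<exists>j i r b.
            (\<forall>k. 0 \<le> r k) \<and> LDI_step dh (pref j) (prof t) j r i b \<and>
            prof (Suc t) = (prof t)(j := b))"

proof
  assume "\<exists>prof :: nat \<Rightarrow> ('a \<Rightarrow> 'i \<Rightarrow> bool). \<forall>t. \<exists>j i r b.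
            (\<forall>k. 0 \<le> r k) \<and> LDI_step dh (pref j) (prof t) j r i b \<and>
            prof (Suc t) = (prof t)(j := b)"
  then obtain prof :: "nat \<Rightarrow> ('a \<Rightarrow> 'i \<Rightarrow> bool)" where hp: "\<forall>t. \<exists>j i r b.
            (\<forall>k. 0 \<le> r k) \<and> LDI_step dh (pref j) (prof t) j r i b \<and>
            prof (Suc t) = (prof t)(j := b)" by (elim exE) (erule that)
  have md: "monotone_dist dh" using assms(1) .
  have sr: "\<And>j. strict_ranking (pref j)" using assms(2) by (rule spec)
  have io: "issue_order os" using assms(3) .
  have lg: "\<And>j. legal os (pref j)" using assms(4) by (rule spec)
  have "\<forall>t. \<exists>j i b. b i \<noteq> prof t j i \<and> (\<forall>k. k \<noteq> i \<longrightarrow> b k = prof t j k) \<and>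
     pref j ((Wout (prof t))(i := b i)) ((Wout (prof t))(i := \<not> b i)) \<and>
     prof (Suc t) = (prof t)(j := b)"
  proof
    fix t
    obtain j i r b where "\<forall>k. 0 \<le> r k" "LDI_step dh (pref j) (prof t) j r i b"
      "prof (Suc t) = (prof t)(j := b)" using spec[OF hp, of t] by (elim exE conjE) (rule that)
    show "\<exists>j i b. b i \<noteq> prof t j i \<and> (\<forall>k. k \<noteq> i \<longrightarrow> b k = prof t j k) \<and>
     pref j ((Wout (prof t))(i := b i)) ((Wout (prof t))(i := \<not> b i)) \<and>
     prof (Suc t) = (prof t)(j := b)"
      apply (rule exI[of _ j], rule exI[of _ i], rule exI[of _ b])
      using key[OF md sr \<open>\<forall>k. 0 \<le> r k\<close> \<open>LDI_step dh (pref j) (prof t) j r i b\<close>]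
        \<open>prof (Suc t) = (prof t)(j := b)\<close> by (elim conjE) (intro conjI)
  qed
  note X = this
  obtain J where X1: "\<forall>t. \<exists>i b. b (i) \<noteq> prof t (J t) (i) \<and> (\<forall>k. k \<noteq> i \<longrightarrow> b k = prof t (J t) k) \<and>
     pref (J t) ((Wout (prof t))(i := b (i))) ((Wout (prof t))(i := \<not> b (i))) \<and>
     prof (Suc t) = (prof t)(J t := b)" using choice[OF X] by (elim exE) (erule that)
  obtain I where X2: "\<forall>t. \<exists>b. b (I t) \<noteq> prof t (J t) (I t) \<and> (\<forall>k. k \<noteq> I t \<longrightarrow> b k = prof t (J t) k) \<and>
     pref (J t) ((Wout (prof t))(I t := b (I t))) ((Wout (prof t))(I t := \<not> b (I t))) \<and>
     prof (Suc t) = (prof t)(J t := b)" using choice[OF X1] by (elim exE) (erule that)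
  obtain B where X3: "\<forall>t. B t (I t) \<noteq> prof t (J t) (I t) \<and> (\<forall>k. k \<noteq> I t \<longrightarrow> B t k = prof t (J t) k) \<and>
     pref (J t) ((Wout (prof t))(I t := B t (I t))) ((Wout (prof t))(I t := \<not> B t (I t))) \<and>
     prof (Suc t) = (prof t)(J t := B t)" using choice[OF X2] by (elim exE) (erule that)
  have H: "\<And>t. B t (I t) \<noteq> prof t (J t) (I t) \<and> (\<forall>k. k \<noteq> I t \<longrightarrow> B t k = prof t (J t) k) \<and>
     pref (J t) ((Wout (prof t))(I t := B t (I t))) ((Wout (prof t))(I t := \<not> B t (I t))) \<and>
     prof (Suc t) = (prof t)(J t := B t)" by (rule spec[OF X3])
  have Hs: "prof (Suc t) = (prof t)(J t := B t)" for t using H[of t] by (elim conjE)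
  have Hb: "B t (I t) \<noteq> prof t (J t) (I t)" for t using H[of t] by (elim conjE)
  have Hk: "k \<noteq> I t \<Longrightarrow> B t k = prof t (J t) k" for t k using H[of t] by blast
  have Hp: "pref (J t) ((Wout (prof t))(I t := B t (I t))) ((Wout (prof t))(I t := \<not> B t (I t)))" for t
    using H[of t] by (elim conjE)
  have ch: "\<And>t j q. q \<noteq> I t \<Longrightarrow> prof (Suc t) j q = prof t j q"
  proof -
    fix t j q assume q: "q \<noteq> I t"
    show "prof (Suc t) j q = prof t j q"
    proof (cases "j = J t")
      case True then show ?thesis using Hs[of t] Hk[OF q] by simp
    next
      case False then show ?thesis using Hs[of t] by simp
    qed
  qed
  have chi: "\<And>t. prof (Suc t) (J t) (I t) = B t (I t)" using Hs by simp
  have chj: "\<And>t j q. j \<noteq> J t \<Longrightarrow> prof (Suc t) j q = prof t j q" using Hs by simp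
  have wcol: "\<And>a a' q. (\<And>j. a j q = a' j q) \<Longrightarrow> Wout a q = Wout a' q"
    unfolding Wout_def plurality_def by simp
  define fr where "fr k T \<longleftrightarrow> (\<forall>t\<ge>T. \<forall>m<k. I t \<noteq> os ! m)" for k T
  have frz: "\<And>k T t m j. fr k T \<Longrightarrow> t \<ge> T \<Longrightarrow> m < k \<Longrightarrow> prof t j (os ! m) = prof T j (os ! m)"
  proof -
    fix k T t m j assume f: "fr k T" and "t \<ge> T" and m: "m < k"
    from \<open>t \<ge> T\<close> show "prof t j (os ! m) = prof T j (os ! m)"
    proof (induction t rule: dec_induct)
      case base then show ?case by simp
    next
      case (step u)
      have "I u \<noteq> os ! m" using f m step.hyps(1) unfolding fr_def by auto
      then have "prof (Suc u) j (os ! m) = prof u j (os ! m)" using ch[of "os ! m" u j] by metis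
      then show ?case using step.IH by simp
    qed
  qed
  have "\<forall>k \<le> length os. \<exists>T. fr k T"
  proof (intro allI impI)
    fix k assume "k \<le> length os"
    then show "\<exists>T. fr k T"
    proof (induction k)
      case 0 then show ?case unfolding fr_def by auto
    next
      case (Suc k)
      then have kl: "k < length os" by simp
      from Suc obtain T where fT: "fr k T" by auto
      define i where "i = os ! k"
      define y where "y = Wout (prof T)"
      define p where "p j = pref j (y(i := True)) (y(i := False))" for j
      have A: "B t i = p (J t)" if t: "t \<ge> T" "I t = i" for t
      proof -
        let ?x = "Wout (prof t)"
        have agree: "\<forall>m<k. ?x (os ! m) = y (os ! m)"
        proof (intro allI impI)
          fix m assume "m < k"
          show "?x (os ! m) = y (os ! m)" unfolding y_def
            by (rule wcol) (rule frz[OF fT t(1) \<open>m < k\<close>])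
        qed
        have P0: "pref (J t) (?x(i := B t i)) (?x(i := \<not> B t i))"
          using Hp[of t] unfolding t(2) .
        have L0: "\<forall>x y. (\<forall>m<k. x (os!m) = y (os!m)) \<longrightarrow>
             (\<forall>c d. pref (J t) (x(os!k:=c)) (x(os!k:=d)) = pref (J t) (y(os!k:=c)) (y(os!k:=d)))"
          using lg[of "J t"] kl unfolding legal_def by blast
        have L: "pref (J t) (?x(i:=B t i)) (?x(i:=\<not> B t i)) = pref (J t) (y(i:=B t i)) (y(i:=\<not> B t i))"
          using L0 agree unfolding i_def by blast
        have R: "pref (J t) (y(i := B t i)) (y(i := \<not> B t i))"
          using iffD1[OF L P0] .
        have asym: "\<And>u w. pref (J t) u w \<Longrightarrow> \<not> pref (J t) w u"
          using sr[of "J t"] unfolding strict_ranking_def by blast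
        show ?thesis
        proof (cases "B t i")
          case True then show ?thesis using R unfolding p_def by simp
        next
          case False
          then have "pref (J t) (y(i := False)) (y(i := True))" using R by simp
          then have "\<not> pref (J t) (y(i := True)) (y(i := False))" using asym by blast
          then show ?thesis using False unfolding p_def by simp
        qed
      qed
      define phi where "phi t = card {j. prof t j i \<noteq> p j}" for t
      have sub: "{j. prof (Suc t) j i \<noteq> p j} \<subseteq> {j. prof t j i \<noteq> p j}" if "t \<ge> T" for t
      proof
        fix j assume "j \<in> {j. prof (Suc t) j i \<noteq> p j}"
        then have j: "prof (Suc t) j i \<noteq> p j" by simp
        show "j \<in> {j. prof t j i \<noteq> p j}"
        proof (cases "I t = i \<and> j = J t")
          case True
          then have "prof (Suc t) j i = B t i" using chi[of t] by simp
          then show ?thesis using A[OF that] True j by simp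
        next
          case False
          then have "prof (Suc t) j i = prof t j i" using ch[of i t j] chj[of j t i] by blast
          then show ?thesis using j by simp
        qed
      qed
      have mono: "phi (Suc t) \<le> phi t" if "t \<ge> T" for t
        unfolding phi_def by (rule card_mono) (use sub[OF that] in auto)
      have dec: "phi (Suc t) < phi t" if "t \<ge> T" "I t = i" for t
      proof -
        have bi: "B t i = p (J t)" using A[OF that] .
        have "prof t (J t) i \<noteq> B t i" using Hb[of t] that(2) by simp
        then have "J t \<in> {j. prof t j i \<noteq> p j}" using bi by simp
        moreover have "J t \<notin> {j. prof (Suc t) j i \<noteq> p j}" using chi[of t] that(2) bi by simp
        ultimately have "{j. prof (Suc t) j i \<noteq> p j} \<subset> {j. prof t j i \<noteq> p j}"
          using sub[OF that(1)] by blast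
        then show ?thesis unfolding phi_def by (rule psubset_card_mono[rotated]) simp
      qed
      obtain T' where T': "T' \<ge> T" "\<forall>t\<ge>T'. I t \<noteq> i"
        using eventually_stop[of T phi "\<lambda>t. I t = i", OF mono dec] by blast
      have "fr (Suc k) T'"
        unfolding fr_def
      proof (intro allI impI)
        fix t m assume t: "t \<ge> T'" and m: "m < Suc k"
        show "I t \<noteq> os ! m"
        proof (cases "m = k")
          case True then show ?thesis using T'(2) t unfolding i_def by simp
        next
          case False
          then have "m < k" using m by simp
          then show ?thesis using fT T'(1) t unfolding fr_def by simp
        qed
      qed
      then show ?case by blast
    qed
  qed
  then obtain T where FT: "fr (length os) T" by blast
  have "I T \<in> set os" using io unfolding issue_order_def by simp
  then obtain m where m: "m < length os" "os ! m = I T" by (metis in_set_conv_nth)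
  have "I T \<noteq> os ! m" using FT m(1) unfolding fr_def by blast
  then show False using m(2) by simp
qed

end
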